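(* Let $N\ge 1$ be an integer and let $g,h,u_m,\alpha_1,\delta_h,\delta_q$ be real numbers. Define $c_i=\frac{i+1}{2i+1}\alpha_1$ and $a_i=\frac{i-1}{2i-1}\alpha_1$ for $i=2,\dots,N$. Let $\boldsymbol{A}_H\in\mathbb{R}^{(N+3)\times(N+3)}$ be the matrix (rows and columns indexed $1,\dots,N+3$) whose only nonzero entries are: - row 1: entry $(1,2)=1$; - row 2: $(2,1)=gh-u_m^2-\tfrac13\alpha_1^2$, $(2,2)=2u_m$, $(2,3)=\tfrac23\alpha_1$, $(2,N+3)=gh$; - rows $3,\dots,N+2$ (the "moment block", row $k+2$ corresponding to moment $k=1,\dots,N$): diagonal entries $(k+2,k+2)=u_m$ for $k=1,\dots,N$; superdiagonal entries $(k+2,k+3)=c_{k+1}$ for $k=1,\dots,N-1$; subdiagonal entries $(k+2,k+1)=a_k$ for $k=2,\dots,N$; in addition $(3,1)=-2u_m\alpha_1$, $(3,2)=2\alpha_1$, and, if $N\ge2$, $(4,1)=-\tfrac23\alpha_1^2$; - row $N+3$: $(N+3,1)=\delta_h$ and $(N+3,j)=\delta_q$ for $j=2,\dots,N+2$, $(N+3,N+3)=0$. Let $A_2\in\mathbb{R}^{N\times N}$ be the tridiagonal matrix with zero diagonal, superdiagonal entries $c_2,\dots,c_N$ and subdiagonal entries $a_2,\dots,a_N$ (for $N=1$, $A_2$ is the $1\times1$ zero matrix). Then the characteristic polynomial $\chi_A(\lambda)=\det(\boldsymbol{A}_H-\lambda I)$ satisfies $$\chi_A(\lambda)=\Big[(-\lambda)\big((\lambda-u_m)^2-gh-\alpha_1^2\big)+gh\,(\delta_h+\lambda\delta_q+2\alpha_1\delta_q)\Big]\cdot\chi_{A_2}(\lambda-u_m),$$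 where $\chi_{A_2}(\lambda-u_m)=\det\big(A_2-(\lambda-u_m)I\big)$.
   Context: $\boldsymbol{A}_H$ is the system matrix of the Hyperbolic Shallow Water Exner Moment (HSWEM) model in the conservative variables $(h,hu_m,h\alpha_1,\dots,h\alpha_N,b)$, where $h$ is water height, $g$ gravitational acceleration, $u_m$ mean velocity, $\alpha_1,\dots,\alpha_N$ the Legendre moment coefficients of the vertical velocity profile, $b$ the bottom, and $\delta_h=\partial_h Q_b$, $\delta_q=\partial_{hu_m}Q_b$ are partial derivatives of the solid transport discharge $Q_b$; for the statement these are just real parameters. *)

theory Defs
  imports "Jordan_Normal_Form.Determinant"
begin

definition c_coef :: "real \<Rightarrow> nat \<Rightarrow> real" where
  "c_coef \<alpha>1 i = real (i + 1) / real (2 * i + 1) * \<alpha>1"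

definition a_coef :: "real \<Rightarrow> nat \<Rightarrow> real" where
  "a_coef \<alpha>1 i = (real i - 1) / (2 * real i - 1) * \<alpha>1"

definition AH_entry :: "nat \<Rightarrow> real \<Rightarrow> real \<Rightarrow> real \<Rightarrow> real \<Rightarrow> real \<Rightarrow> real \<Rightarrow> nat \<Rightarrow> nat \<Rightarrow> real" where
  "AH_entry N g h um \<alpha>1 \<delta>h \<delta>q i j =
    (if i = 1 then (if j = 2 then 1 else 0)
     else if i = 2 then
       (if j = 1 then g * h - um\<^sup>2 - \<alpha>1\<^sup>2 / 3
        else if j = 2 then 2 * um
        else if j = 3 then 2 / 3 * \<alpha>1
        else if j = N + 3 then g * h
        else 0)
     else if 3 \<le> i \<and> i \<le> N + 2 then
       (let k = i - 2 in
        if j = i then um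
        else if j = i + 1 \<and> 1 \<le> k \<and> k \<le> N - 1 then c_coef \<alpha>1 (k + 1)
        else if j + 1 = i \<and> 2 \<le> k \<and> k \<le> N then a_coef \<alpha>1 k
        else if i = 3 \<and> j = 1 then - 2 * um * \<alpha>1
        else if i = 3 \<and> j = 2 then 2 * \<alpha>1
        else if i = 4 \<and> j = 1 \<and> 2 \<le> N then - 2 / 3 * \<alpha>1\<^sup>2
        else 0)
     else if i = N + 3 then
       (if j = 1 then \<delta>h
        else if 2 \<le> j \<and> j \<le> N + 2 then \<delta>q
        else 0)
     else 0)"

text \<open>The (N+3)x(N+3) matrix A_H (JNF matrices are 0-indexed, so shift by one).\<close>
definition A_H :: "nat \<Rightarrow> real \<Rightarrow> real \<Rightarrow> real \<Rightarrow> real \<Rightarrow> real \<Rightarrow> real \<Rightarrow> real mat" where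
  "A_H N g h um \<alpha>1 \<delta>h \<delta>q =
     mat (N + 3) (N + 3) (\<lambda>(i, j). AH_entry N g h um \<alpha>1 \<delta>h \<delta>q (i + 1) (j + 1))"

definition A2_entry :: "nat \<Rightarrow> real \<Rightarrow> nat \<Rightarrow> nat \<Rightarrow> real" where
  "A2_entry N \<alpha>1 i j =
    (if j = i + 1 \<and> 1 \<le> i \<and> i \<le> N - 1 then c_coef \<alpha>1 (i + 1)
     else if j + 1 = i \<and> 2 \<le> i \<and> i \<le> N then a_coef \<alpha>1 i
     else 0)"

definition A_2 :: "nat \<Rightarrow> real \<Rightarrow> real mat" where
  "A_2 N \<alpha>1 = mat N N (\<lambda>(i, j). A2_entry N \<alpha>1 (i + 1) (j + 1))"

end

theory Submission
  imports Defs
begin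

lemma sum_two:
  fixes f :: "nat \<Rightarrow> 'a::comm_monoid_add"
  assumes "a < n" "b < n" "a \<noteq> b" "\<And>i. i < n \<Longrightarrow> i \<noteq> a \<Longrightarrow> i \<noteq> b \<Longrightarrow> f i = 0"
  shows "sum f {..<n} = f a + f b"
proof -
  have "sum f {..<n} = sum f {a, b}"
    by (rule sum.mono_neutral_right) (use assms in auto)
  then show ?thesis using assms by simp
qed

lemma sum_one:
  fixes f :: "nat \<Rightarrow> 'a::comm_monoid_add"
  assumes "a < n" "\<And>i. i < n \<Longrightarrow> i \<noteq> a \<Longrightarrow> f i = 0"
  shows "sum f {..<n} = f a"
proof -
  have "sum f {..<n} = sum f {a}"
    by (rule sum.mono_neutral_right) (use assms in auto)
  then show ?thesis using assms by simp
qed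

theorem theorem1:
  fixes N :: nat and g h um \<alpha>1 \<delta>h \<delta>q lam :: real
  assumes "N \<ge> 1"
  shows "det (A_H N g h um \<alpha>1 \<delta>h \<delta>q - lam \<cdot>\<^sub>m 1\<^sub>m (N + 3)) =
    ((- lam) * ((lam - um)\<^sup>2 - g * h - \<alpha>1\<^sup>2) + g * h * (\<delta>h + lam * \<delta>q + 2 * \<alpha>1 * \<delta>q))
    * det (A_2 N \<alpha>1 - (lam - um) \<cdot>\<^sub>m 1\<^sub>m N)"
proof -
  define M where "M = A_H N g h um \<alpha>1 \<delta>h \<delta>q - lam \<cdot>\<^sub>m 1\<^sub>m (N + 3)"
  define T where "T = A_2 N \<alpha>1 - (lam - um) \<cdot>\<^sub>m 1\<^sub>m N"
  define Q where "Q = g * h + \<alpha>1\<^sup>2 - (lam - um)\<^sup>2"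
  define D where "D = \<delta>h + lam * \<delta>q + 2 * \<alpha>1 * \<delta>q"
  have Mc: "M \<in> carrier_mat (N+3) (N+3)" unfolding M_def A_H_def by auto
  have Tc: "T \<in> carrier_mat N N" unfolding T_def A_2_def by auto
  have Mij: "M $$ (i,j) = AH_entry N g h um \<alpha>1 \<delta>h \<delta>q (i + 1) (j + 1) - (if i = j then lam else 0)"
    if "i < N+3" "j < N+3" for i j
    using that unfolding M_def A_H_def by auto
  have Tij: "T $$ (i,j) = A2_entry N \<alpha>1 (i + 1) (j + 1) - (if i = j then lam - um else 0)"
    if "i < N" "j < N" for i j
    using that unfolding T_def A_2_def by auto
  define M' where "M' = addcol (2 * \<alpha>1) 0 2 (addcol lam 0 1 M)"
  have M'c: "M' \<in> carrier_mat (N+3) (N+3)" unfolding M'_def using Mc by auto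
  have detM: "det M = det M'"
  proof -
    have c1: "addcol lam 0 1 M \<in> carrier_mat (N+3) (N+3)" using Mc by auto
    have "det M' = det (addcol lam 0 1 M)" unfolding M'_def by (rule det_addcol[OF _ _ c1]) auto
    also have "\<dots> = det M" by (rule det_addcol[OF _ _ Mc]) auto
    finally show ?thesis by simp
  qed
  define B where "B = mat (N+2) (N+2) (\<lambda>(i,j).
     if i = 0 then (if j = 0 then Q else if j = 1 then 2/3 * \<alpha>1 else if j = N+1 then g*h else 0)
     else if i \<le> N then (if j = 0 then 0 else if j \<le> N then T $$ (i - 1, j - 1) else 0)
     else (if j = 0 then D else if j \<le> N then \<delta>q else - lam))"
  have Bc: "B \<in> carrier_mat (N+2) (N+2)" unfolding B_def by auto
  have M'ij: "M' $$ (i,j) = (if j = 0 then M $$ (i,0) + lam * M $$ (i,1) + 2 * \<alpha>1 * M $$ (i,2) else M $$ (i,j))"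
    if "i < N+3" "j < N+3" for i j
    using that Mc unfolding M'_def by auto
  have delM': "mat_delete M' 0 1 = B"
  proof (rule eq_matI)
    fix i j assume "i < dim_row B" "j < dim_col B"
    then have ij: "i < N+2" "j < N+2" using Bc by auto
    have "mat_delete M' 0 1 $$ (i,j) = M' $$ (Suc i, if j < 1 then j else Suc j)"
      unfolding mat_delete_def using ij M'c by auto
    also have "\<dots> = B $$ (i,j)"
    proof (cases "j = 0")
      case True
      then show ?thesis using ij assms
        by (auto simp: M'ij Mij B_def AH_entry_def Q_def D_def a_coef_def c_coef_def Let_def power2_eq_square algebra_simps)
    next
      case False
      then show ?thesis using ij assms
        by (auto simp: M'ij Mij B_def AH_entry_def Tij A2_entry_def Let_def)
    qed
    finally show "mat_delete M' 0 1 $$ (i,j) = B $$ (i,j)" .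
  qed (use Bc M'c in auto)
  have step1: "det M' = - det B"
  proof -
    have "det M' = (\<Sum>j<N+3. M' $$ (0,j) * cofactor M' 0 j)"
      by (rule laplace_expansion_row[OF M'c]) auto
    also have "\<dots> = M' $$ (0,1) * cofactor M' 0 1"
      by (rule sum_one) (auto simp: M'ij Mij AH_entry_def)
    also have "\<dots> = - det B"
      using delM' by (simp add: M'ij Mij AH_entry_def cofactor_def)
    finally show ?thesis .
  qed
  have step2: "det B = Q * (- lam) * det T - D * g * h * det T"
  proof -
    have "det B = (\<Sum>i<N+2. B $$ (i,0) * cofactor B i 0)"
      by (rule laplace_expansion_column[OF Bc]) auto
    also have "\<dots> = B $$ (0,0) * cofactor B 0 0 + B $$ (N+1,0) * cofactor B (N+1) 0"
      by (rule sum_two) (auto simp: B_def)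
    also have "B $$ (0,0) = Q" by (simp add: B_def)
    also have "B $$ (N+1,0) = D" by (simp add: B_def)
    also have "cofactor B 0 0 = det T * (- lam)"
    proof -
      have e: "mat_delete B 0 0 = four_block_mat T (0\<^sub>m N 1) (mat 1 N (\<lambda>_. \<delta>q)) (mat 1 1 (\<lambda>_. - lam))"
        by (rule eq_matI) (use Tc in \<open>auto simp: mat_delete_def B_def\<close>)
      have "det (mat_delete B 0 0) = det T * det (mat 1 1 (\<lambda>_. - lam))"
        unfolding e by (rule det_four_block_mat_upper_right_zero[OF Tc]) auto
      also have "det (mat 1 1 (\<lambda>_. - lam)) = - lam" by (subst det_single) auto
      finally show ?thesis by (simp add: cofactor_def)
    qed
    also have "cofactor B (N+1) 0 = (-1)^(N+1) * (g * h * (-1)^N * det T)"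
    proof -
      define C where "C = mat_delete B (N+1) 0"
      have Cc: "C \<in> carrier_mat (N+1) (N+1)" unfolding C_def using Bc by auto
      have Cij: "C $$ (i,j) = B $$ (i, Suc j)" if "i < N+1" "j < N+1" for i j
        using that Bc unfolding C_def mat_delete_def by auto
      have "det C = (\<Sum>i<N+1. C $$ (i,N) * cofactor C i N)"
        by (rule laplace_expansion_column[OF Cc]) auto
      also have "\<dots> = C $$ (0,N) * cofactor C 0 N"
        by (rule sum_one) (auto simp: Cij B_def)
      also have "C $$ (0,N) = g * h" using assms by (simp add: Cij B_def)
      finally have dC: "det C = g * h * cofactor C 0 N" .
      have "mat_delete C 0 N = T"
        by (rule eq_matI) (use Tc Cc in \<open>auto simp: mat_delete_def Cij B_def\<close>)
      then have "det C = g * h * ((-1)^N * det T)" using dC by (simp add: cofactor_def)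
      then show ?thesis unfolding cofactor_def C_def by simp
    qed
    finally show ?thesis by (simp add: algebra_simps)
  qed
  show ?thesis
    unfolding M_def[symmetric] T_def[symmetric] detM step1 step2
    unfolding Q_def D_def by (simp add: algebra_simps power2_eq_square)
qed

end
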